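(* Let $n\geq1$. In the monoid $\Sigma_n$ and in the monoid $\mathcal{H}_n^+$, any two elements $x,y$ admit both a common right-multiple and a common left-multiple.
   Context: $\mathcal{H}_n^+$ is the monoid with generators $\rho_1,\dots,\rho_n$ and relations $\rho_1\rho_j\rho_i=\rho_{i+1}\rho_j$ for $1\leq i<j\leq n$. $\Sigma_n$ is the submonoid of the braid group $\mathcal{B}_{n+1}$ (standard Artin generators $\sigma_1,\dots,\sigma_n$) generated by $\sigma_1,\ \sigma_1\sigma_2,\ \dots,\ \sigma_1\sigma_2\cdots\sigma_n$. A common right-multiple of $x,y$ is an element $xa=yb$; a common left-multiple is an element $ax=by$. *)

theory Defs
  imports Main
begin

text \<open>Words over the generators rho_1..rho_n are lists of naturals in {1..n}.\<close>

inductive H_step :: "nat \<Rightarrow> nat list \<Rightarrow> nat list \<Rightarrow> bool" for n where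
  "1 \<le> i \<Longrightarrow> i < j \<Longrightarrow> j \<le> n \<Longrightarrow>
     H_step n (u @ [1, j, i] @ v) (u @ [Suc i, j] @ v)"

inductive H_eq :: "nat \<Rightarrow> nat list \<Rightarrow> nat list \<Rightarrow> bool" for n where
  H_refl: "H_eq n w w"
| H_step_fwd: "H_step n u w \<Longrightarrow> H_eq n u w"
| H_sym: "H_eq n u w \<Longrightarrow> H_eq n w u"
| H_trans: "H_eq n u v \<Longrightarrow> H_eq n v w \<Longrightarrow> H_eq n u w"

text \<open>A letter (i, True) is sigma_i, (i, False) is sigma_i inverse, 1 <= i <= n.\<close>

inductive B_step :: "nat \<Rightarrow> (nat \<times> bool) list \<Rightarrow> (nat \<times> bool) list \<Rightarrow> bool" for n where
  B_comm: "1 \<le> i \<Longrightarrow> i \<le> n \<Longrightarrow> 1 \<le> j \<Longrightarrow> j \<le> n \<Longrightarrow> i + 2 \<le> j \<Longrightarrow>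
     B_step n (u @ [(i, True), (j, True)] @ v) (u @ [(j, True), (i, True)] @ v)"
| B_braid: "1 \<le> i \<Longrightarrow> Suc i \<le> n \<Longrightarrow>
     B_step n (u @ [(i, True), (Suc i, True), (i, True)] @ v)
              (u @ [(Suc i, True), (i, True), (Suc i, True)] @ v)"
| B_cancel: "1 \<le> i \<Longrightarrow> i \<le> n \<Longrightarrow>
     B_step n (u @ [(i, b), (i, \<not> b)] @ v) (u @ v)"

inductive B_eq :: "nat \<Rightarrow> (nat \<times> bool) list \<Rightarrow> (nat \<times> bool) list \<Rightarrow> bool" for n where
  B_refl: "B_eq n w w"
| B_step_fwd: "B_step n u w \<Longrightarrow> B_eq n u w"
| B_sym: "B_eq n u w \<Longrightarrow> B_eq n w u"
| B_trans: "B_eq n u v \<Longrightarrow> B_eq n v w \<Longrightarrow> B_eq n u w"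

text \<open>An element of Sigma_n is a product
  delta_(k_1) ... delta_(k_m) with all k_i in {1..n}; we represent it by the list
  of indices ks, and its braid word is Sigma_word ks.\<close>

definition delta :: "nat \<Rightarrow> (nat \<times> bool) list" where
  "delta k = map (\<lambda>i. (i, True)) [1..<Suc k]"

definition Sigma_word :: "nat list \<Rightarrow> (nat \<times> bool) list" where
  "Sigma_word ks = concat (map delta ks)"

end

theory Submission imports Defs begin

locale cmon =
  fixes E :: "nat list \<Rightarrow> nat list \<Rightarrow> bool" and n :: nat
  assumes n1: "1 \<le> n"
  and rf: "E u u" and sy: "E u v \<Longrightarrow> E v u" and tr: "E u v \<Longrightarrow> E v w \<Longrightarrow> E u w"
  and cong: "E u v \<Longrightarrow> E (w@u@z) (w@v@z)"
  and rel: "1 \<le> i \<Longrightarrow> i < n \<Longrightarrow> E [1,n,i] [Suc i, n]"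
begin

lemmas [trans] = tr

lemma congL: "E u v \<Longrightarrow> E (w@u) (w@v)" using cong[of u v w "[]"] by simp
lemma congR: "E u v \<Longrightarrow> E (u@z) (v@z)" using cong[of u v "[]" z] by simp
lemma eq: "u = v \<Longrightarrow> E u v" using rf by simp

lemma repE: "a + b = c \<Longrightarrow> replicate a x @ replicate b x = replicate c x"
  by (metis replicate_add)

abbreviation rn :: "nat \<Rightarrow> nat list" where "rn p \<equiv> replicate p n"

lemma L: "1 \<le> p \<Longrightarrow> 1 \<le> k \<Longrightarrow> k + p \<le> n \<Longrightarrow> E ([k+p] @ rn p) ([p] @ rn p @ [k])"
proof (induction p rule: nat_induct_at_least)
  case base
  then show ?case using sy[OF rel[of k]] by simp
next
  case (Suc p)
  have "E ([k + Suc p] @ rn (Suc p)) ([Suc (k+p), n] @ rn p)" by (rule eq) simp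
  also have "E \<dots> ([1,n,k+p] @ rn p)" using Suc by (intro congR sy[OF rel]) auto
  also have "E \<dots> ([1,n] @ ([k+p] @ rn p))" by (rule eq) simp
  also have "E \<dots> ([1,n] @ ([p] @ rn p @ [k]))" using Suc by (intro congL) auto
  also have "E \<dots> ([1,n,p] @ (rn p @ [k]))" by (rule eq) simp
  also have "E \<dots> ([Suc p,n] @ (rn p @ [k]))" using Suc by (intro congR rel) auto
  also have "E \<dots> ([Suc p] @ rn (Suc p) @ [k])" by (rule eq) (simp add: replicate_append_same[symmetric])
  finally show ?case .
qed

lemma C: "1 \<le> p \<Longrightarrow> p < n \<Longrightarrow> E (rn (Suc p)) ([p] @ rn p @ [n-p])"
proof -
  assume a: "1 \<le> p" "p < n"
  have "E (rn (Suc p)) ([n-p+p] @ rn p)" by (rule eq) (use a in simp)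
  also have "E \<dots> ([p] @ rn p @ [n-p])" using a by (intro L) auto
  finally show ?thesis .
qed

abbreviation D :: "nat list" where "D \<equiv> rn (Suc n)"

lemma rdiv: "1 \<le> k \<Longrightarrow> k \<le> n \<Longrightarrow> \<exists>c. set c \<subseteq> {1..n} \<and> E ([k]@c) D"
proof (cases "k = n")
  case True
  then show ?thesis using n1 by (intro exI[of _ "rn n"]) (auto intro: eq)
next
  case False
  assume a: "1 \<le> k" "k \<le> n"
  have "E ([k] @ rn k @ [n-k] @ rn (n-k)) (([k] @ rn k @ [n-k]) @ rn (n-k))" by (rule eq) simp
  also have "E \<dots> (rn (Suc k) @ rn (n-k))" using a False by (intro congR sy[OF C]) auto
  also have "E \<dots> D" by (rule eq, rule repE) (use a in simp)
  finally show ?thesis using a n1 False by (intro exI[of _ "rn k @ [n-k] @ rn (n-k)"]) auto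
qed

lemma ldiv: "1 \<le> k \<Longrightarrow> k \<le> n \<Longrightarrow> \<exists>c. set c \<subseteq> {1..n} \<and> E (c@[k]) D"
proof (cases "k = n")
  case True
  then show ?thesis using n1 by (intro exI[of _ "rn n"]) (auto intro: eq simp: replicate_append_same)
next
  case False
  assume a: "1 \<le> k" "k \<le> n"
  have "E (rn k @ [n-k] @ rn (n-k) @ [k]) (rn k @ ([n-k] @ rn (n-k) @ [n-(n-k)]))" by (rule eq) (use a in simp)
  also have "E \<dots> (rn k @ rn (Suc (n-k)))" using a False by (intro congL sy[OF C]) auto
  also have "E \<dots> D" by (rule eq, rule repE) (use a in simp)
  finally show ?thesis using a n1 False by (intro exI[of _ "rn k @ [n-k] @ rn (n-k)"]) auto
qed

lemma central: "1 \<le> k \<Longrightarrow> k \<le> n \<Longrightarrow> E ([k]@D) (D@[k])"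
proof (cases "k = n")
  case True
  then show ?thesis by (intro eq) (simp add: replicate_append_same)
next
  case False
  assume a: "1 \<le> k" "k \<le> n"
  have h: "rn k @ rn (Suc (n-k)) = D" using a False by (intro repE) simp
  have "E ([k]@D) (([k] @ rn k) @ rn (Suc (n-k)))" by (rule eq) (simp only: append_assoc h)
  also have "E \<dots> (([k] @ rn k) @ ([n-k] @ rn (n-k) @ [n-(n-k)]))" using a False by (intro congL C) auto
  also have "E \<dots> (([k] @ rn k @ [n-k]) @ (rn (n-k) @ [k]))" by (rule eq) (use a in simp)
  also have "E \<dots> (rn (Suc k) @ (rn (n-k) @ [k]))" using a False by (intro congR sy[OF C]) auto
  also have "E \<dots> (D@[k])" by (rule eq) (subst repE[of "Suc k" "n-k" "Suc n", symmetric], use a in auto)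
  finally show ?thesis .
qed

abbreviation Dm :: "nat \<Rightarrow> nat list" where "Dm m \<equiv> rn (Suc n * m)"

lemma Dm_Suc: "Dm (Suc m) = Dm m @ D"
proof -
  have "Suc n*m + Suc n = Suc n * Suc m" by simp
  then show ?thesis by (metis repE)
qed

lemma Dm_Suc': "Dm (Suc m) = D @ Dm m"
proof -
  have "Suc n + Suc n*m = Suc n * Suc m" by simp
  then show ?thesis by (metis repE)
qed

lemma Dm_comm: "Dm p @ Dm q = Dm q @ Dm p"
  by (metis repE add.commute)

lemma central_m: "1 \<le> k \<Longrightarrow> k \<le> n \<Longrightarrow> E ([k]@Dm m) (Dm m@[k])"
proof (induction m)
  case 0 then show ?case by (intro eq) simp
next
  case (Suc m)
  have "E ([k]@Dm (Suc m)) (([k]@Dm m)@D)" by (rule eq) (simp only: Dm_Suc append_assoc)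
  also have "E \<dots> ((Dm m@[k])@D)" using Suc by (intro congR) auto
  also have "E \<dots> (Dm m@([k]@D))" by (rule eq) simp
  also have "E \<dots> (Dm m@(D@[k]))" using Suc by (intro congL central) auto
  also have "E \<dots> (Dm (Suc m)@[k])" by (rule eq) (simp only: Dm_Suc append_assoc)
  finally show ?case .
qed

lemma rmul: "set x \<subseteq> {1..n} \<Longrightarrow> \<exists>a. set a \<subseteq> {1..n} \<and> E (x@a) (Dm (length x))"
proof (induction x)
  case Nil then show ?case by (intro exI[of _ "[]"]) (auto intro: eq)
next
  case (Cons k x)
  then obtain a where a: "set a \<subseteq> {1..n}" "E (x@a) (Dm (length x))" by auto
  have kk: "1 \<le> k" "k \<le> n" using Cons.prems by auto
  obtain c where c: "set c \<subseteq> {1..n}" "E ([k]@c) D" using rdiv[OF kk] by blast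
  have "E ((k#x)@a@c) ([k]@(x@a)@c)" by (rule eq) simp
  also have "E \<dots> ([k]@Dm (length x)@c)" using a by (intro cong) auto
  also have "E \<dots> (([k]@Dm (length x))@c)" by (rule eq) simp
  also have "E \<dots> ((Dm (length x)@[k])@c)" using Cons by (intro congR central_m) auto
  also have "E \<dots> (Dm (length x)@([k]@c))" by (rule eq) simp
  also have "E \<dots> (Dm (length x)@D)" using c by (intro congL) auto
  also have "E \<dots> (Dm (length (k#x)))" by (rule eq) (simp only: length_Cons Dm_Suc)
  finally show ?case using a c by (intro exI[of _ "a@c"]) auto
qed

lemma lmul: "set x \<subseteq> {1..n} \<Longrightarrow> \<exists>a. set a \<subseteq> {1..n} \<and> E (a@x) (Dm (length x))"
proof (induction x rule: rev_induct)
  case Nil then show ?case by (intro exI[of _ "[]"]) (auto intro: eq)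
next
  case (snoc k x)
  then obtain a where a: "set a \<subseteq> {1..n}" "E (a@x) (Dm (length x))" by auto
  have kk: "1 \<le> k" "k \<le> n" using snoc.prems by auto
  obtain c where c: "set c \<subseteq> {1..n}" "E (c@[k]) D" using ldiv[OF kk] by blast
  have "E ((c@a)@x@[k]) (c@(a@x)@[k])" by (rule eq) simp
  also have "E \<dots> (c@Dm (length x)@[k])" using a by (intro cong) auto
  also have "E \<dots> (c@([k]@Dm (length x)))" using snoc by (intro congL sy[OF central_m]) auto
  also have "E \<dots> ((c@[k])@Dm (length x))" by (rule eq) simp
  also have "E \<dots> (D@Dm (length x))" using c by (intro congR) auto
  also have "E \<dots> (Dm (length (x@[k])))" by (rule eq) (simp only: length_append_singleton Dm_Suc')
  finally show ?case using a c by (intro exI[of _ "c@a"]) auto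
qed

lemma common:
  assumes "set x \<subseteq> {1..n}" "set y \<subseteq> {1..n}"
  shows "(\<exists>a b. set a \<subseteq> {1..n} \<and> set b \<subseteq> {1..n} \<and> E (x@a) (y@b)) \<and>
         (\<exists>a b. set a \<subseteq> {1..n} \<and> set b \<subseteq> {1..n} \<and> E (a@x) (b@y))"
proof
  obtain a where a: "set a \<subseteq> {1..n}" "E (x@a) (Dm (length x))" using rmul assms by blast
  obtain b where b: "set b \<subseteq> {1..n}" "E (y@b) (Dm (length y))" using rmul assms by blast
  have "E (x@a@Dm (length y)) (Dm (length x)@Dm (length y))" using congR[OF a(2)] by simp
  also have "E \<dots> (Dm (length y)@Dm (length x))" by (rule eq, rule Dm_comm)
  also have "E \<dots> (y@b@Dm (length x))" using sy[OF congR[OF b(2)]] by simp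
  finally show "\<exists>a b. set a \<subseteq> {1..n} \<and> set b \<subseteq> {1..n} \<and> E (x@a) (y@b)"
    using a b n1 by (intro exI[of _ "a@Dm (length y)"] exI[of _ "b@Dm (length x)"]) auto
next
  obtain a where a: "set a \<subseteq> {1..n}" "E (a@x) (Dm (length x))" using lmul assms by blast
  obtain b where b: "set b \<subseteq> {1..n}" "E (b@y) (Dm (length y))" using lmul assms by blast
  have "E ((Dm (length y)@a)@x) (Dm (length y)@Dm (length x))" using congL[OF a(2)] by simp
  also have "E \<dots> (Dm (length x)@Dm (length y))" by (rule eq, rule Dm_comm)
  also have "E \<dots> ((Dm (length x)@b)@y)" using sy[OF congL[OF b(2)]] by simp
  finally show "\<exists>a b. set a \<subseteq> {1..n} \<and> set b \<subseteq> {1..n} \<and> E (a@x) (b@y)"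
    using a b n1 by (intro exI[of _ "Dm (length y)@a"] exI[of _ "Dm (length x)@b"]) auto
qed


end

lemma Bstep_cong: "B_step n u v \<Longrightarrow> B_step n (w@u@z) (w@v@z)"
proof (induction rule: B_step.cases)
  case (B_comm i j u v)
  then show ?case using B_step.B_comm[of i n j "w@u" "v@z"] by simp
next
  case (B_braid i u v)
  then show ?case using B_step.B_braid[of i n "w@u" "v@z"] by simp
next
  case (B_cancel i u b v)
  then show ?case using B_step.B_cancel[of i n "w@u" b "v@z"] by simp
qed

lemma Beq_cong: "B_eq n u v \<Longrightarrow> B_eq n (p@u@q) (p@v@q)"
proof (induction rule: B_eq.induct)
  case (B_refl w) then show ?case by (rule B_eq.B_refl)
next
  case (B_step_fwd u w) then show ?case by (intro B_eq.B_step_fwd Bstep_cong)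
next
  case (B_sym u w) show ?case using B_sym.IH by (rule B_eq.B_sym)
next
  case (B_trans u v w) then show ?case by (metis B_eq.B_trans)
qed

definition P :: "nat list \<Rightarrow> (nat \<times> bool) list" where "P w = map (\<lambda>i. (i, True)) w"

definition Bp where "Bp n u v = B_eq n (P u) (P v)"

lemma Bp_refl: "u = v \<Longrightarrow> Bp n u v" unfolding Bp_def by (simp add: B_eq.B_refl)
lemma Bp_sym: "Bp n u v \<Longrightarrow> Bp n v u" unfolding Bp_def by (rule B_eq.B_sym)
lemma Bp_trans[trans]: "Bp n u v \<Longrightarrow> Bp n v w \<Longrightarrow> Bp n u w" unfolding Bp_def by (rule B_eq.B_trans)
lemma Bp_cong: "Bp n u v \<Longrightarrow> Bp n (w@u@z) (w@v@z)" unfolding Bp_def P_def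
  using Beq_cong by fastforce
lemma Bp_congL: "Bp n u v \<Longrightarrow> Bp n (w@u) (w@v)" using Bp_cong[of n u v w "[]"] by simp
lemma Bp_congR: "Bp n u v \<Longrightarrow> Bp n (u@z) (v@z)" using Bp_cong[of n u v "[]" z] by simp

lemma Bp_comm: "1 \<le> i \<Longrightarrow> j \<le> n \<Longrightarrow> i + 2 \<le> j \<Longrightarrow> Bp n [i,j] [j,i]"
  unfolding Bp_def P_def using B_step.B_comm[of i n j "[]" "[]"]
  by (auto intro: B_eq.B_step_fwd)

lemma Bp_braid: "1 \<le> m \<Longrightarrow> Suc m \<le> n \<Longrightarrow> Bp n [m, Suc m, m] [Suc m, m, Suc m]"
  unfolding Bp_def P_def using B_step.B_braid[of m n "[]" "[]"]
  by (auto intro: B_eq.B_step_fwd)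

lemma pastR: "\<forall>x\<in>set xs. m+2 \<le> x \<and> x \<le> n \<Longrightarrow> 1 \<le> m \<Longrightarrow> Bp n (m # xs) (xs @ [m])"
proof (induction xs)
  case Nil then show ?case by (simp add: Bp_refl)
next
  case (Cons x xs)
  have "Bp n (m # x # xs) ([m,x] @ xs)" by (rule Bp_refl) simp
  also have "Bp n \<dots> ([x,m] @ xs)" using Cons.prems by (intro Bp_congR Bp_comm) auto
  also have "Bp n \<dots> ([x] @ (m # xs))" by (rule Bp_refl) simp
  also have "Bp n \<dots> ([x] @ (xs @ [m]))" using Cons by (intro Bp_congL) auto
  finally show ?case by simp
qed

lemma pastL: "\<forall>x\<in>set xs. 1 \<le> x \<and> x+2 \<le> m \<Longrightarrow> m \<le> n \<Longrightarrow> Bp n (xs @ [m]) (m # xs)"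
proof (induction xs)
  case Nil then show ?case by (simp add: Bp_refl)
next
  case (Cons x xs)
  have "Bp n (x # xs @ [m]) ([x] @ (xs @ [m]))" by (rule Bp_refl) simp
  also have "Bp n \<dots> ([x] @ (m # xs))" using Cons by (intro Bp_congL) auto
  also have "Bp n \<dots> ([x,m] @ xs)" by (rule Bp_refl) simp
  also have "Bp n \<dots> ([m,x] @ xs)" using Cons.prems by (intro Bp_congR Bp_comm) auto
  finally show ?case by simp
qed

lemma upt_split: "1 \<le> m \<Longrightarrow> m < n \<Longrightarrow> [1..<Suc n] = [1..<m] @ [m, Suc m] @ [m+2..<Suc n]"
proof -
  assume a: "1 \<le> m" "m < n"
  have "[1..<Suc n] = [1..<m] @ [m..<m + (Suc n - m)]" using a upt_add_eq_append[of 1 m "Suc n - m"] by simp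
  moreover have "[m..<m + (Suc n - m)] = m # Suc m # [m+2..<Suc n]" using a
    by (simp add: upt_conv_Cons del: upt_Suc)
  ultimately show ?thesis by (simp del: upt_Suc)
qed

lemma shift: "1 \<le> m \<Longrightarrow> m < n \<Longrightarrow> Bp n ([1..<Suc n] @ [m]) (Suc m # [1..<Suc n])"
proof -
  assume a: "1 \<le> m" "m < n"
  have "Bp n ([1..<Suc n] @ [m]) (([1..<m] @ [m, Suc m]) @ ([m+2..<Suc n] @ [m]))"
    by (intro Bp_refl) (subst upt_split[OF a], simp)
  also have "Bp n \<dots> (([1..<m] @ [m, Suc m]) @ (m # [m+2..<Suc n]))"
    using a by (intro Bp_congL Bp_sym[OF pastR]) auto
  also have "Bp n \<dots> ([1..<m] @ [m, Suc m, m] @ [m+2..<Suc n])" by (rule Bp_refl) simp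
  also have "Bp n \<dots> ([1..<m] @ [Suc m, m, Suc m] @ [m+2..<Suc n])" using a by (intro Bp_cong Bp_braid) auto
  also have "Bp n \<dots> (([1..<m] @ [Suc m]) @ ([m, Suc m] @ [m+2..<Suc n]))" by (rule Bp_refl) simp
  also have "Bp n \<dots> ((Suc m # [1..<m]) @ ([m, Suc m] @ [m+2..<Suc n]))" using a by (intro Bp_congR pastL) auto
  also have "Bp n \<dots> (Suc m # [1..<Suc n])" by (intro Bp_refl) (subst upt_split[OF a], simp)
  finally show ?thesis .
qed

lemma dd: "i < n \<Longrightarrow> Bp n ([1..<Suc n] @ [1..<Suc i]) (map Suc [1..<Suc i] @ [1..<Suc n])"
proof (induction i)
  case 0 then show ?case by (simp add: Bp_refl)
next
  case (Suc i)
  have "Bp n ([1..<Suc n] @ [1..<Suc (Suc i)]) (([1..<Suc n] @ [1..<Suc i]) @ [Suc i])" by (rule Bp_refl) simp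
  also have "Bp n \<dots> ((map Suc [1..<Suc i] @ [1..<Suc n]) @ [Suc i])" using Suc by (intro Bp_congR) auto
  also have "Bp n \<dots> (map Suc [1..<Suc i] @ ([1..<Suc n] @ [Suc i]))" by (rule Bp_refl) simp
  also have "Bp n \<dots> (map Suc [1..<Suc i] @ (Suc (Suc i) # [1..<Suc n]))" using Suc by (intro Bp_congL shift) auto
  also have "Bp n \<dots> (map Suc [1..<Suc (Suc i)] @ [1..<Suc n])" by (rule Bp_refl) simp
  finally show ?case .
qed

lemma brel: "1 \<le> i \<Longrightarrow> i < n \<Longrightarrow> Bp n ([1] @ [1..<Suc n] @ [1..<Suc i]) ([1..<Suc (Suc i)] @ [1..<Suc n])"
proof -
  assume a: "1 \<le> i" "i < n"
  have "Bp n ([1] @ [1..<Suc n] @ [1..<Suc i]) ([1] @ map Suc [1..<Suc i] @ [1..<Suc n])"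
    using a by (intro Bp_congL dd)
  also have "Bp n \<dots> ([1..<Suc (Suc i)] @ [1..<Suc n])"
    by (intro Bp_refl) (simp add: map_Suc_upt upt_conv_Cons)
  finally show ?thesis .
qed

lemma Sigma_P: "Sigma_word u = P (concat (map (\<lambda>k. [1..<Suc k]) u))"
  unfolding Sigma_word_def P_def delta_def by (induction u) auto

definition SE where "SE n u v = B_eq n (Sigma_word u) (Sigma_word v)"

lemma SE_cmon: "1 \<le> n \<Longrightarrow> cmon (SE n) n"
proof (unfold_locales)
  show "SE n u u" for u unfolding SE_def by (rule B_eq.B_refl)
  show "SE n u v \<Longrightarrow> SE n v u" for u v unfolding SE_def by (rule B_eq.B_sym)
  show "SE n u v \<Longrightarrow> SE n v w \<Longrightarrow> SE n u w" for u v w unfolding SE_def by (rule B_eq.B_trans)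
  show "SE n u v \<Longrightarrow> SE n (w@u@z) (w@v@z)" for u v w z unfolding SE_def Sigma_word_def
    using Beq_cong by fastforce
  show "1 \<le> i \<Longrightarrow> i < n \<Longrightarrow> SE n [1,n,i] [Suc i, n]" for i
    using brel[of i n] unfolding SE_def Sigma_P Bp_def by simp
qed

lemma Hstep_cong: "H_step n u v \<Longrightarrow> H_step n (w@u@z) (w@v@z)"
proof (induction rule: H_step.cases)
  case (1 i j u v)
  then show ?case using H_step.intros[of i j n "w@u" "v@z"] by simp
qed

lemma H_cmon: "1 \<le> n \<Longrightarrow> cmon (H_eq n) n"
proof (unfold_locales)
  show "H_eq n u u" for u by (rule H_refl)
  show "H_eq n u v \<Longrightarrow> H_eq n v u" for u v by (rule H_sym)
  show "H_eq n u v \<Longrightarrow> H_eq n v w \<Longrightarrow> H_eq n u w" for u v w by (rule H_trans)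
  show "H_eq n u v \<Longrightarrow> H_eq n (p@u@q) (p@v@q)" for u v p q
  proof (induction rule: H_eq.induct)
    case (H_refl w) then show ?case by (rule H_eq.H_refl)
  next
    case (H_step_fwd u w) then show ?case by (intro H_eq.H_step_fwd Hstep_cong)
  next
    case (H_sym u w) show ?case using H_sym.IH by (rule H_eq.H_sym)
  next
    case (H_trans u v w) then show ?case by (metis H_eq.H_trans)
  qed
  show "1 \<le> i \<Longrightarrow> i < n \<Longrightarrow> H_eq n [1,n,i] [Suc i, n]" for i
    using H_step.intros[of i n n "[]" "[]"] by (auto intro: H_step_fwd)
qed


theorem lemma5p4:
  fixes n :: nat
  assumes "n \<ge> 1"
  shows "(\<forall>x y. set x \<subseteq> {1..n} \<and> set y \<subseteq> {1..n} \<longrightarrow>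
            (\<exists>a b. set a \<subseteq> {1..n} \<and> set b \<subseteq> {1..n} \<and>
                   B_eq n (Sigma_word (x @ a)) (Sigma_word (y @ b))) \<and>
            (\<exists>a b. set a \<subseteq> {1..n} \<and> set b \<subseteq> {1..n} \<and>
                   B_eq n (Sigma_word (a @ x)) (Sigma_word (b @ y))))
       \<and> (\<forall>x y. set x \<subseteq> {1..n} \<and> set y \<subseteq> {1..n} \<longrightarrow>
            (\<exists>a b. set a \<subseteq> {1..n} \<and> set b \<subseteq> {1..n} \<and> H_eq n (x @ a) (y @ b)) \<and>
            (\<exists>a b. set a \<subseteq> {1..n} \<and> set b \<subseteq> {1..n} \<and> H_eq n (a @ x) (b @ y)))"
proof -
  interpret S: cmon "SE n" n using SE_cmon assms by simp
  interpret H: cmon "H_eq n" n using H_cmon assms by simp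
  show ?thesis using S.common H.common unfolding SE_def by blast
qed

end
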